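(* Let $G=(V,E,s,t)$ be a directed $st$-graph. Then $G$ is weak if and only if there exist a minimal vertex separator $T$ of $G$, vertices $a,b\in T$ (possibly $a=b$), and a directed walk of length at least one from $a$ to $b$.
   Context: A directed $st$-graph $G=(V,E,s,t)$ is a finite directed graph with no self-loops and no parallel edges, with distinct source $s$ (no incoming edges) and sink $t$ (no outgoing edges), such that every vertex lies on some directed walk from $s$ to $t$. An $st$-path (or just path) is a directed walk from $s$ to $t$, possibly repeating vertices; $P(G)$ denotes the set of such walks. A channel on $G$ is a charge function $\eta:V\to\mathbb{N}\cup\{\infty\}$ with $\eta(s)=\eta(t)=\infty$ and $\eta(v)\in\mathbb{N}$ otherwise. A flow for $\eta$ is a finitely supported function $\phi:P(G)\to\mathbb{N}$ such that $\phi(v):=\sum_{p\in P(G)} m_v(p)\,\phi(p)\le\eta(v)$ for all $v\in V$, where $m_v(p)$ is the number of occurrences of $v$ in $p$. Its value is $\sum_p\phi(p)$. $\max_\eta$ is the maximum value of a flow for $\eta$; $\eta$ is dead if $\max_\eta=0$. The residual of $\eta$ after $\phi$ is $\eta'(v)=\eta(v)-\phi(v)$. A flow $\phi$ inhibits $\eta$ if the residual of $\eta$ after $\phi$ is dead; $\min_\eta$ is the smallest value of an inhibiting flow for $\eta$. $G$ is weak if $\min_\eta\neq\max_\eta$ for some channel $\eta$ on $G$. A vertex separator is a set $T\subseteq V$ such that every $st$-walk contains a vertex of $T$ (so $\{s\}$ and $\{t\}$ are separators); a minimal vertex separator (mvs) is an inclusion-minimal vertex separator. *)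

theory Defs
  imports Main "HOL-Library.Extended_Nat"
begin

text \<open>A directed graph is given by a vertex set V and an edge relation E (a set of
ordered pairs, so there are no parallel edges).\<close>

definition st_graph :: "'v set \<Rightarrow> ('v \<times> 'v) set \<Rightarrow> 'v \<Rightarrow> 'v \<Rightarrow> bool" where
  "st_graph V E s t \<longleftrightarrow>
     finite V \<and> E \<subseteq> V \<times> V \<and> (\<forall>v. (v, v) \<notin> E) \<and>
     s \<in> V \<and> t \<in> V \<and> s \<noteq> t \<and>
     (\<forall>u. (u, s) \<notin> E) \<and> (\<forall>u. (t, u) \<notin> E) \<and>
     (\<forall>v\<in>V. \<exists>p. p \<noteq> [] \<and> hd p = s \<and> last p = t \<and> v \<in> set p \<and>
                 (\<forall>i < length p - 1. (p ! i, p ! Suc i) \<in> E))"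

definition is_walk :: "('v \<times> 'v) set \<Rightarrow> 'v list \<Rightarrow> bool" where
  "is_walk E p \<longleftrightarrow> p \<noteq> [] \<and> (\<forall>i < length p - 1. (p ! i, p ! Suc i) \<in> E)"

text \<open>st-paths: walks from s to t (vertices may repeat).\<close>
definition st_paths :: "('v \<times> 'v) set \<Rightarrow> 'v \<Rightarrow> 'v \<Rightarrow> 'v list set" where
  "st_paths E s t = {p. is_walk E p \<and> hd p = s \<and> last p = t}"

definition channel :: "'v set \<Rightarrow> 'v \<Rightarrow> 'v \<Rightarrow> ('v \<Rightarrow> enat) \<Rightarrow> bool" where
  "channel V s t \<eta> \<longleftrightarrow> \<eta> s = \<infinity> \<and> \<eta> t = \<infinity> \<and> (\<forall>v\<in>V - {s, t}. \<eta> v \<noteq> \<infinity>)"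

definition supp :: "('v list \<Rightarrow> nat) \<Rightarrow> 'v list set" where
  "supp \<phi> = {p. \<phi> p \<noteq> 0}"

definition load :: "('v list \<Rightarrow> nat) \<Rightarrow> 'v \<Rightarrow> nat" where
  "load \<phi> v = (\<Sum>p\<in>supp \<phi>. count_list p v * \<phi> p)"

definition flow_value :: "('v list \<Rightarrow> nat) \<Rightarrow> nat" where
  "flow_value \<phi> = (\<Sum>p\<in>supp \<phi>. \<phi> p)"

definition is_flow :: "'v set \<Rightarrow> ('v \<times> 'v) set \<Rightarrow> 'v \<Rightarrow> 'v \<Rightarrow> ('v \<Rightarrow> enat)
    \<Rightarrow> ('v list \<Rightarrow> nat) \<Rightarrow> bool" where
  "is_flow V E s t \<eta> \<phi> \<longleftrightarrow> finite (supp \<phi>) \<and> supp \<phi> \<subseteq> st_paths E s t \<and>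
     (\<forall>v\<in>V. enat (load \<phi> v) \<le> \<eta> v)"

definition max_flow :: "'v set \<Rightarrow> ('v \<times> 'v) set \<Rightarrow> 'v \<Rightarrow> 'v \<Rightarrow> ('v \<Rightarrow> enat) \<Rightarrow> enat" where
  "max_flow V E s t \<eta> = (SUP \<phi>\<in>{\<phi>. is_flow V E s t \<eta> \<phi>}. enat (flow_value \<phi>))"

definition dead :: "'v set \<Rightarrow> ('v \<times> 'v) set \<Rightarrow> 'v \<Rightarrow> 'v \<Rightarrow> ('v \<Rightarrow> enat) \<Rightarrow> bool" where
  "dead V E s t \<eta> \<longleftrightarrow> max_flow V E s t \<eta> = 0"

definition residual :: "('v \<Rightarrow> enat) \<Rightarrow> ('v list \<Rightarrow> nat) \<Rightarrow> 'v \<Rightarrow> enat" where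
  "residual \<eta> \<phi> = (\<lambda>v. \<eta> v - enat (load \<phi> v))"

definition inhibits :: "'v set \<Rightarrow> ('v \<times> 'v) set \<Rightarrow> 'v \<Rightarrow> 'v \<Rightarrow> ('v \<Rightarrow> enat)
    \<Rightarrow> ('v list \<Rightarrow> nat) \<Rightarrow> bool" where
  "inhibits V E s t \<eta> \<phi> \<longleftrightarrow> is_flow V E s t \<eta> \<phi> \<and> dead V E s t (residual \<eta> \<phi>)"

text \<open>Minimum value of an inhibiting flow (infimum in enat; infinity if none exists).\<close>
definition min_flow :: "'v set \<Rightarrow> ('v \<times> 'v) set \<Rightarrow> 'v \<Rightarrow> 'v \<Rightarrow> ('v \<Rightarrow> enat) \<Rightarrow> enat" where
  "min_flow V E s t \<eta> = (INF \<phi>\<in>{\<phi>. inhibits V E s t \<eta> \<phi>}. enat (flow_value \<phi>))"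

definition weak :: "'v set \<Rightarrow> ('v \<times> 'v) set \<Rightarrow> 'v \<Rightarrow> 'v \<Rightarrow> bool" where
  "weak V E s t \<longleftrightarrow> (\<exists>\<eta>. channel V s t \<eta> \<and> min_flow V E s t \<eta> \<noteq> max_flow V E s t \<eta>)"

definition vertex_separator :: "'v set \<Rightarrow> ('v \<times> 'v) set \<Rightarrow> 'v \<Rightarrow> 'v \<Rightarrow> 'v set \<Rightarrow> bool" where
  "vertex_separator V E s t T \<longleftrightarrow> T \<subseteq> V \<and> (\<forall>p\<in>st_paths E s t. set p \<inter> T \<noteq> {})"

definition mvs :: "'v set \<Rightarrow> ('v \<times> 'v) set \<Rightarrow> 'v \<Rightarrow> 'v \<Rightarrow> 'v set \<Rightarrow> bool" where
  "mvs V E s t T \<longleftrightarrow> vertex_separator V E s t T \<and>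
     (\<forall>T'. T' \<subset> T \<longrightarrow> \<not> vertex_separator V E s t T')"

end

theory Submission
  imports Defs
begin

lemma walk_succ: "is_walk E p \<longleftrightarrow> p \<noteq> [] \<and> successively (\<lambda>x y. (x,y) \<in> E) p"
  unfolding is_walk_def successively_conv_nth by (auto simp: less_diff_conv)

lemma st_paths_iff: "p \<in> st_paths E s t \<longleftrightarrow> p \<noteq> [] \<and> successively (\<lambda>x y. (x,y) \<in> E) p \<and> hd p = s \<and> last p = t"
  unfolding st_paths_def walk_succ by auto

definition pf :: "'v list list \<Rightarrow> 'v list \<Rightarrow> nat" where
  "pf ps = (\<lambda>q. count_list ps q)"

lemma supp_pf: "supp (pf ps) = set ps"
  unfolding supp_def pf_def by (auto simp: count_list_0_iff)

lemma sum_count_mult: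
  assumes "set ps \<subseteq> A" "finite A"
  shows "(\<Sum>p\<in>A. f p * count_list ps p) = sum_list (map f ps)"
  using assms
proof (induction ps)
  case Nil then show ?case by simp
next
  case (Cons x xs)
  have "(\<Sum>p\<in>A. f p * count_list (x # xs) p) = (\<Sum>p\<in>A. f p * (if x = p then 1 else 0) + f p * count_list xs p)"
    by (rule sum.cong) (auto simp: algebra_simps)
  also have "\<dots> = (\<Sum>p\<in>A. f p * (if x = p then 1 else 0)) + (\<Sum>p\<in>A. f p * count_list xs p)"
    by (rule sum.distrib)
  also have "(\<Sum>p\<in>A. f p * (if x = p then 1 else 0)) = f x"
    using Cons.prems by (simp add: sum.delta if_distrib[of "\<lambda>c. f _ * c"] cong: if_cong)
  finally show ?case using Cons by simp
qed

lemma load_pf: "load (pf ps) v = sum_list (map (\<lambda>p. count_list p v) ps)"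
  unfolding load_def supp_pf by (subst sum_count_mult[symmetric]) (auto simp: pf_def)

lemma value_pf: "flow_value (pf ps) = length ps"
proof -
  have "flow_value (pf ps) = (\<Sum>p\<in>set ps. 1 * count_list ps p)"
    unfolding flow_value_def supp_pf by (simp add: pf_def)
  also have "\<dots> = sum_list (map (\<lambda>_. 1) ps)" by (rule sum_count_mult) auto
  finally show ?thesis by (simp add: sum_list_triv)
qed

lemma load_ge:
  assumes "finite (supp \<phi>)" "p \<in> supp \<phi>"
  shows "count_list p v * \<phi> p \<le> load \<phi> v"
  unfolding load_def using assms by (intro member_le_sum) auto

lemma sum_count_T:
  assumes "finite T"
  shows "(\<Sum>v\<in>T. count_list p v) = length (filter (\<lambda>x. x \<in> T) p)"
proof (induction p)
  case Nil then show ?case by simp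
next
  case (Cons x xs)
  have "(\<Sum>v\<in>T. count_list (x # xs) v) = (\<Sum>v\<in>T. (if x = v then 1 else 0) + count_list xs v)"
    by (rule sum.cong) auto
  also have "\<dots> = (\<Sum>v\<in>T. (if x = v then 1 else 0)) + (\<Sum>v\<in>T. count_list xs v)"
    by (rule sum.distrib)
  finally show ?case using Cons assms by (simp add: sum.delta)
qed

lemma sum_load_T:
  assumes "finite T" "finite (supp \<phi>)"
  shows "(\<Sum>v\<in>T. load \<phi> v) = (\<Sum>p\<in>supp \<phi>. length (filter (\<lambda>x. x \<in> T) p) * \<phi> p)"
proof -
  have "(\<Sum>v\<in>T. load \<phi> v) = (\<Sum>p\<in>supp \<phi>. \<Sum>v\<in>T. count_list p v * \<phi> p)"
    unfolding load_def by (rule sum.swap)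
  also have "\<dots> = (\<Sum>p\<in>supp \<phi>. (\<Sum>v\<in>T. count_list p v) * \<phi> p)"
    by (simp add: sum_distrib_right)
  finally show ?thesis using assms by (simp add: sum_count_T)
qed

lemma zero_flow: "is_flow V E s t \<eta> (\<lambda>_. 0)"
  unfolding is_flow_def supp_def load_def by (auto simp: zero_enat_def[symmetric])

lemma max_flow_ge: "is_flow V E s t \<eta> \<phi> \<Longrightarrow> enat (flow_value \<phi>) \<le> max_flow V E s t \<eta>"
  unfolding max_flow_def by (rule SUP_upper) auto

lemma min_flow_le: "inhibits V E s t \<eta> \<phi> \<Longrightarrow> min_flow V E s t \<eta> \<le> enat (flow_value \<phi>)"
  unfolding min_flow_def by (rule INF_lower) auto

lemma sep_zero_dead:
  assumes "\<forall>p\<in>st_paths E s t. set p \<inter> T \<noteq> {}" "T \<subseteq> V" "\<forall>v\<in>T. \<eta> v = 0"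
  shows "dead V E s t \<eta>"
proof -
  have "flow_value \<psi> = 0" if "is_flow V E s t \<eta> \<psi>" for \<psi>
  proof -
    have "supp \<psi> = {}"
    proof (rule ccontr)
      assume "supp \<psi> \<noteq> {}"
      then obtain p where p: "p \<in> supp \<psi>" by auto
      with that have "p \<in> st_paths E s t" "finite (supp \<psi>)" unfolding is_flow_def by auto
      with assms(1) obtain x where x: "x \<in> set p" "x \<in> T" by auto
      have "count_list p x * \<psi> p \<le> load \<psi> x" by (rule load_ge) fact+
      moreover have "count_list p x > 0" using x by (metis count_list_0_iff gr0I)
      moreover have "\<psi> p > 0" using p by (simp add: supp_def)
      moreover have "enat (load \<psi> x) \<le> 0" using that x assms unfolding is_flow_def by (metis subsetD)
      ultimately show False by (simp add: zero_enat_def)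
    qed
    then show ?thesis by (simp add: flow_value_def)
  qed
  then show ?thesis unfolding dead_def max_flow_def using zero_flow[of V E s t \<eta>] by (auto simp: zero_enat_def intro!: SUP_eq_const)
qed


lemma shorten:
  assumes "p \<in> st_paths E s t"
  shows "\<exists>q\<in>st_paths E s t. distinct q \<and> set q \<subseteq> set p"
  using assms
proof (induction "length p" arbitrary: p rule: less_induct)
  case less
  show ?case
  proof (cases "distinct p")
    case True then show ?thesis using less.prems by blast
  next
    case False
    then obtain xs ys zs y where p: "p = xs @ [y] @ ys @ [y] @ zs" using not_distinct_decomp by blast
    let ?q = "xs @ [y] @ zs"
    have w: "successively (\<lambda>x y. (x,y) \<in> E) p" "hd p = s" "last p = t" using less.prems by (auto simp: st_paths_iff)
    have "successively (\<lambda>x y. (x,y) \<in> E) ?q"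
      using w(1) unfolding p by (auto simp: successively_append_iff successively_Cons)
    moreover have "hd ?q = s" using w(2) unfolding p by (cases xs) auto
    moreover have "last ?q = t" using w(3) unfolding p by (cases zs) auto
    ultimately have "?q \<in> st_paths E s t" by (simp add: st_paths_iff)
    moreover have "length ?q < length p" unfolding p by simp
    ultimately obtain q where "q\<in>st_paths E s t" "distinct q" "set q \<subseteq> set ?q" using less.hyps by blast
    moreover have "set ?q \<subseteq> set p" unfolding p by auto
    ultimately show ?thesis by blast
  qed
qed

lemma st_paths_V:
  assumes "st_graph V E s t" "p \<in> st_paths E s t"
  shows "set p \<subseteq> V"
proof
  fix x assume "x \<in> set p"
  then obtain xs ys where p: "p = xs @ x # ys" by (meson split_list)
  have w: "successively (\<lambda>x y. (x,y) \<in> E) p" "hd p = s" "last p = t" using assms(2) by (auto simp: st_paths_iff)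
  have EV: "E \<subseteq> V \<times> V" "s \<noteq> t" using assms(1) unfolding st_graph_def by auto
  show "x \<in> V"
  proof (cases ys)
    case (Cons y ys')
    then have "(x, y) \<in> E" using w(1) unfolding p Cons by (simp add: successively_append_iff)
    then show ?thesis using EV by auto
  next
    case Nil
    then have "xs \<noteq> []" using w EV unfolding p by (metis append_Nil last_ConsL list.sel(1))
    then have "(last xs, x) \<in> E" using w(1) unfolding p by (simp add: successively_append_iff)
    then show ?thesis using EV by auto
  qed
qed

lemma distinct_count_le1: "distinct q \<Longrightarrow> count_list q v \<le> 1"
  by (induction q) auto

lemma dead_sep:
  assumes "st_graph V E s t" "dead V E s t \<eta>"
  shows "\<forall>p\<in>st_paths E s t. set p \<inter> {v\<in>V. \<eta> v = 0} \<noteq> {}"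
proof (rule ccontr)
  assume "\<not> ?thesis"
  then obtain p where p: "p \<in> st_paths E s t" "set p \<inter> {v\<in>V. \<eta> v = 0} = {}" by auto
  obtain q where q: "q \<in> st_paths E s t" "distinct q" "set q \<subseteq> set p" using shorten[OF p(1)] by blast
  have L: "\<forall>v\<in>V. enat (load (pf [q]) v) \<le> \<eta> v"
  proof
    fix v assume v: "v \<in> V"
    show "enat (load (pf [q]) v) \<le> \<eta> v"
    proof (cases "v \<in> set q")
      case True
      then have "\<eta> v \<noteq> 0" using p q v by auto
      then have "enat 1 \<le> \<eta> v" by (cases "\<eta> v") (auto simp: zero_enat_def)
      moreover have "load (pf [q]) v \<le> 1" using q distinct_count_le1 by (simp add: load_pf)
      ultimately show ?thesis by (meson enat_ord_simps(1) order_trans)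
    qed (simp add: load_pf zero_enat_def[symmetric])
  qed
  have "is_flow V E s t \<eta> (pf [q])"
    unfolding is_flow_def supp_pf using L q(1) by simp
  from max_flow_ge[OF this] have "enat 1 \<le> max_flow V E s t \<eta>" by (simp add: value_pf)
  with assms(2) show False by (simp add: dead_def zero_enat_def)
qed

lemma mvs_exists:
  assumes "finite S" "vertex_separator V E s t S"
  shows "\<exists>T\<subseteq>S. mvs V E s t T"
  using assms
proof (induction S rule: finite_psubset_induct)
  case (psubset S)
  show ?case
  proof (cases "mvs V E s t S")
    case True then show ?thesis by blast
  next
    case False
    then obtain T' where "T' \<subset> S" "vertex_separator V E s t T'" using psubset.prems unfolding mvs_def by auto
    with psubset.IH show ?thesis by (meson order.strict_implies_order order_trans)
  qed
qed

lemma mvs_once: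
  assumes "mvs V E s t T"
    and noW: "\<not> (\<exists>a b p. a \<in> T \<and> b \<in> T \<and> is_walk E p \<and> length p \<ge> 2 \<and> hd p = a \<and> last p = b)"
    and p: "p \<in> st_paths E s t"
  shows "length (filter (\<lambda>x. x \<in> T) p) = 1"
proof -
  have "set p \<inter> T \<noteq> {}" using assms(1) p unfolding mvs_def vertex_separator_def by auto
  then have "\<exists>x\<in>set p. x \<in> T" by auto
  from split_list_first_prop[OF this] obtain xs a r where pa: "p = xs @ a # r" "a \<in> T" "\<forall>y\<in>set xs. y \<notin> T"
    by blast
  have "filter (\<lambda>x. x \<in> T) r = []"
  proof (rule ccontr)
    assume "filter (\<lambda>x. x \<in> T) r \<noteq> []"
    then have "\<exists>x\<in>set r. x \<in> T" by (simp add: filter_empty_conv)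
    from split_list_prop[OF this] obtain us b vs where r: "r = us @ b # vs" "b \<in> T" by blast
    have "successively (\<lambda>x y. (x,y) \<in> E) p" using p by (simp add: st_paths_iff)
    moreover have eq: "p = xs @ (a # us @ [b]) @ vs" using pa r by simp
    ultimately have "successively (\<lambda>x y. (x,y) \<in> E) (xs @ (a # us @ [b]) @ vs)" by (simp only:)
    then have "successively (\<lambda>x y. (x,y) \<in> E) (a # us @ [b])"
      unfolding successively_append_iff[of _ xs] successively_append_iff[of _ "a # us @ [b]"] by blast
    then have "is_walk E (a # us @ [b])" by (simp add: walk_succ)
    moreover have "length (a # us @ [b]) \<ge> 2" by simp
    moreover have "hd (a # us @ [b]) = a" "last (a # us @ [b]) = b" by simp_all
    ultimately show False using noW pa(2) r(2) by blast
  qed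
  then show ?thesis using pa by simp
qed

lemma mvs_s:
  assumes "mvs V E s t T" "s \<in> T"
  shows "T = {s}"
proof (rule ccontr)
  assume "T \<noteq> {s}"
  then have "{s} \<subset> T" using assms(2) by auto
  moreover have "vertex_separator V E s t {s}"
    unfolding vertex_separator_def
  proof (intro conjI ballI)
    show "{s} \<subseteq> V" using assms unfolding mvs_def vertex_separator_def by auto
    fix p assume "p \<in> st_paths E s t"
    then have "p \<noteq> []" "hd p = s" by (auto simp: st_paths_iff)
    then show "set p \<inter> {s} \<noteq> {}" using hd_in_set by fastforce
  qed
  ultimately show False using assms(1) unfolding mvs_def by blast
qed

lemma mvs_t:
  assumes "mvs V E s t T" "t \<in> T"
  shows "T = {t}"
proof (rule ccontr)
  assume "T \<noteq> {t}"
  then have "{t} \<subset> T" using assms(2) by auto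
  moreover have "vertex_separator V E s t {t}"
    unfolding vertex_separator_def
  proof (intro conjI ballI)
    show "{t} \<subseteq> V" using assms unfolding mvs_def vertex_separator_def by auto
    fix p assume "p \<in> st_paths E s t"
    then have "p \<noteq> []" "last p = t" by (auto simp: st_paths_iff)
    then show "set p \<inter> {t} \<noteq> {}" using last_in_set by fastforce
  qed
  ultimately show False using assms(1) unfolding mvs_def by blast
qed


lemma load_superset:
  assumes "finite A" "supp \<phi> \<subseteq> A"
  shows "load \<phi> v = (\<Sum>p\<in>A. count_list p v * \<phi> p)"
  unfolding load_def using assms by (intro sum.mono_neutral_left) (auto simp: supp_def)

lemma value_superset:
  assumes "finite A" "supp \<phi> \<subseteq> A"
  shows "flow_value \<phi> = (\<Sum>p\<in>A. \<phi> p)"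
  unfolding flow_value_def using assms by (intro sum.mono_neutral_left) (auto simp: supp_def)

lemma value_eq_T:
  assumes "mvs V E s t T" "finite T"
    and noW: "\<not> (\<exists>a b p. a \<in> T \<and> b \<in> T \<and> is_walk E p \<and> length p \<ge> 2 \<and> hd p = a \<and> last p = b)"
    and fl: "is_flow V E s t \<eta> \<psi>"
  shows "flow_value \<psi> = (\<Sum>v\<in>T. load \<psi> v)"
proof -
  have fin: "finite (supp \<psi>)" and sub: "supp \<psi> \<subseteq> st_paths E s t" using fl unfolding is_flow_def by auto
  have "(\<Sum>v\<in>T. load \<psi> v) = (\<Sum>p\<in>supp \<psi>. length (filter (\<lambda>x. x \<in> T) p) * \<psi> p)"
    by (rule sum_load_T) fact+
  also have "\<dots> = (\<Sum>p\<in>supp \<psi>. \<psi> p)"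
  proof (rule sum.cong)
    fix p assume "p \<in> supp \<psi>"
    then have "p \<in> st_paths E s t" using sub by auto
    then show "length (filter (\<lambda>x. x \<in> T) p) * \<psi> p = \<psi> p" using mvs_once[OF assms(1) noW] by simp
  qed simp
  finally show ?thesis by (simp add: flow_value_def)
qed

lemma inhibit_ge_max:
  assumes G: "st_graph V E s t"
    and noW: "\<not> (\<exists>T a b p. mvs V E s t T \<and> a \<in> T \<and> b \<in> T \<and> is_walk E p \<and> length p \<ge> 2 \<and> hd p = a \<and> last p = b)"
    and inh: "inhibits V E s t \<eta> \<phi>"
  shows "max_flow V E s t \<eta> \<le> enat (flow_value \<phi>)"
proof -
  have flphi: "is_flow V E s t \<eta> \<phi>" and dd: "dead V E s t (residual \<eta> \<phi>)" using inh unfolding inhibits_def by auto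
  define Z where "Z = {v\<in>V. residual \<eta> \<phi> v = 0}"
  have finV: "finite V" using G unfolding st_graph_def by auto
  have vsZ: "vertex_separator V E s t Z"
    unfolding vertex_separator_def Z_def using dead_sep[OF G dd] by auto
  have "finite Z" unfolding Z_def using finV by auto
  from mvs_exists[OF this vsZ] obtain T where T: "T \<subseteq> Z" "mvs V E s t T" by blast
  have finT: "finite T" using T `finite Z` finite_subset by blast
  have noWT: "\<not> (\<exists>a b p. a \<in> T \<and> b \<in> T \<and> is_walk E p \<and> length p \<ge> 2 \<and> hd p = a \<and> last p = b)"
  proof
    assume "\<exists>a b p. a \<in> T \<and> b \<in> T \<and> is_walk E p \<and> length p \<ge> 2 \<and> hd p = a \<and> last p = b"
    then obtain a b p where "a \<in> T \<and> b \<in> T \<and> is_walk E p \<and> length p \<ge> 2 \<and> hd p = a \<and> last p = b" by blast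
    with T(2) have "\<exists>T a b p. mvs V E s t T \<and> a \<in> T \<and> b \<in> T \<and> is_walk E p \<and> length p \<ge> 2 \<and> hd p = a \<and> last p = b" by blast
    with noW show False by contradiction
  qed
  have etaT: "\<eta> v = enat (load \<phi> v)" if "v \<in> T" for v
  proof -
    have v: "v \<in> V" "\<eta> v - enat (load \<phi> v) = 0" using that T(1) unfolding Z_def residual_def by auto
    have le: "enat (load \<phi> v) \<le> \<eta> v" using flphi v(1) unfolding is_flow_def by auto
    show ?thesis
    proof (cases "\<eta> v")
      case (enat m) then show ?thesis using v(2) le by (simp add: zero_enat_def)
    next
      case infinity then show ?thesis using v(2) by simp
    qed
  qed
  have "enat (flow_value \<psi>) \<le> enat (flow_value \<phi>)" if fl: "is_flow V E s t \<eta> \<psi>" for \<psi>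
  proof -
    have "flow_value \<psi> = (\<Sum>v\<in>T. load \<psi> v)" by (rule value_eq_T[OF T(2) finT noWT fl])
    also have "\<dots> \<le> (\<Sum>v\<in>T. load \<phi> v)"
    proof (rule sum_mono)
      fix v assume v: "v \<in> T"
      then have "v \<in> V" using T(1) unfolding Z_def by auto
      then have "enat (load \<psi> v) \<le> \<eta> v" using fl unfolding is_flow_def by auto
      then show "load \<psi> v \<le> load \<phi> v" using etaT[OF v] by simp
    qed
    also have "\<dots> = flow_value \<phi>" by (rule value_eq_T[OF T(2) finT noWT flphi, symmetric])
    finally show ?thesis by simp
  qed
  then show ?thesis unfolding max_flow_def by (intro SUP_least) auto
qed

lemma max_attained:
  assumes "max_flow V E s t \<eta> \<noteq> \<infinity>"
  shows "\<exists>\<phi>. is_flow V E s t \<eta> \<phi> \<and> enat (flow_value \<phi>) = max_flow V E s t \<eta>"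
proof -
  let ?A = "(\<lambda>\<phi>. enat (flow_value \<phi>)) ` {\<phi>. is_flow V E s t \<eta> \<phi>}"
  have ne: "?A \<noteq> {}" using zero_flow[of V E s t \<eta>] by auto
  have "Sup ?A \<noteq> \<infinity>" using assms unfolding max_flow_def .
  then have fin: "finite ?A" using ne unfolding Sup_enat_def by (auto split: if_splits)
  then have "Sup ?A = Max ?A" using ne unfolding Sup_enat_def by auto
  moreover have "Max ?A \<in> ?A" using fin ne by (rule Max_in)
  ultimately show ?thesis unfolding max_flow_def by auto
qed

lemma max_is_inhibiting:
  assumes fl: "is_flow V E s t \<eta> \<phi>" and mx: "enat (flow_value \<phi>) = max_flow V E s t \<eta>"
  shows "inhibits V E s t \<eta> \<phi>"
  unfolding inhibits_def
proof (intro conjI fl)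
  show "dead V E s t (residual \<eta> \<phi>)"
  proof (rule ccontr)
    assume "\<not> dead V E s t (residual \<eta> \<phi>)"
    have "\<exists>\<psi>. is_flow V E s t (residual \<eta> \<phi>) \<psi> \<and> flow_value \<psi> \<noteq> 0"
    proof (rule ccontr)
      assume "\<not> ?thesis"
      then have "\<forall>\<psi>\<in>{\<psi>. is_flow V E s t (residual \<eta> \<phi>) \<psi>}. enat (flow_value \<psi>) = 0" by (auto simp: zero_enat_def)
      then have "max_flow V E s t (residual \<eta> \<phi>) = 0" unfolding max_flow_def
        using zero_flow[of V E s t "residual \<eta> \<phi>"] by (intro SUP_eq_const) auto
      with \<open>\<not> dead V E s t (residual \<eta> \<phi>)\<close> show False by (simp add: dead_def)
    qed
    then obtain \<psi> where fpsi: "is_flow V E s t (residual \<eta> \<phi>) \<psi>" and nz: "flow_value \<psi> \<noteq> 0" by blast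
    define \<chi> where "\<chi> = (\<lambda>p. \<phi> p + \<psi> p)"
    define A where "A = supp \<phi> \<union> supp \<psi>"
    have finA: "finite A" and subA: "A \<subseteq> st_paths E s t"
      using fl fpsi unfolding A_def is_flow_def by auto
    have suppchi: "supp \<chi> = A" unfolding A_def \<chi>_def supp_def by auto
    have lchi: "load \<chi> v = load \<phi> v + load \<psi> v" for v
    proof -
      have "load \<chi> v = (\<Sum>p\<in>A. count_list p v * \<chi> p)" by (rule load_superset[OF finA]) (simp add: suppchi)
      also have "\<dots> = (\<Sum>p\<in>A. count_list p v * \<phi> p) + (\<Sum>p\<in>A. count_list p v * \<psi> p)"
        unfolding \<chi>_def distrib_left by (rule sum.distrib)
      also have "\<dots> = load \<phi> v + load \<psi> v"
        using load_superset[OF finA, of \<phi>] load_superset[OF finA, of \<psi>] unfolding A_def by auto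
      finally show ?thesis .
    qed
    have vchi: "flow_value \<chi> = flow_value \<phi> + flow_value \<psi>"
    proof -
      have "flow_value \<chi> = (\<Sum>p\<in>A. \<chi> p)" by (rule value_superset[OF finA]) (simp add: suppchi)
      also have "\<dots> = (\<Sum>p\<in>A. \<phi> p) + (\<Sum>p\<in>A. \<psi> p)"
        unfolding \<chi>_def by (rule sum.distrib)
      also have "\<dots> = flow_value \<phi> + flow_value \<psi>"
        using value_superset[OF finA, of \<phi>] value_superset[OF finA, of \<psi>] unfolding A_def by auto
      finally show ?thesis .
    qed
    have "is_flow V E s t \<eta> \<chi>"
      unfolding is_flow_def
    proof (intro conjI ballI)
      show "finite (supp \<chi>)" "supp \<chi> \<subseteq> st_paths E s t" using finA subA suppchi by auto
      fix v assume v: "v \<in> V"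
      have a: "enat (load \<phi> v) \<le> \<eta> v" using fl v unfolding is_flow_def by auto
      have b: "enat (load \<psi> v) \<le> \<eta> v - enat (load \<phi> v)" using fpsi v unfolding is_flow_def residual_def by auto
      show "enat (load \<chi> v) \<le> \<eta> v" unfolding lchi
        using a b by (cases "\<eta> v") auto
    qed
    from max_flow_ge[OF this] mx have "enat (flow_value \<chi>) \<le> enat (flow_value \<phi>)" by simp
    with vchi nz show False by simp
  qed
qed

lemma min_eq_max:
  assumes G: "st_graph V E s t"
    and noW: "\<not> (\<exists>T a b p. mvs V E s t T \<and> a \<in> T \<and> b \<in> T \<and> is_walk E p \<and> length p \<ge> 2 \<and> hd p = a \<and> last p = b)"
  shows "min_flow V E s t \<eta> = max_flow V E s t \<eta>"
proof (rule antisym)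
  show "max_flow V E s t \<eta> \<le> min_flow V E s t \<eta>"
    unfolding min_flow_def by (rule INF_greatest) (use inhibit_ge_max[OF G noW] in auto)
  show "min_flow V E s t \<eta> \<le> max_flow V E s t \<eta>"
  proof (cases "max_flow V E s t \<eta> = \<infinity>")
    case True then show ?thesis by simp
  next
    case False
    then obtain \<phi> where "is_flow V E s t \<eta> \<phi>" "enat (flow_value \<phi>) = max_flow V E s t \<eta>"
      using max_attained[OF False] by blast
    then show ?thesis using min_flow_le[OF max_is_inhibiting] by metis
  qed
qed


lemma good_path:
  assumes "mvs V E s t T" "x \<in> T"
  shows "\<exists>u v. u @ x # v \<in> st_paths E s t \<and> set (u @ x # v) \<inter> T = {x} \<and> x \<notin> set u \<and> x \<notin> set v"
proof -
  have "T - {x} \<subset> T" using assms(2) by auto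
  then have "\<not> vertex_separator V E s t (T - {x})" using assms(1) unfolding mvs_def by blast
  moreover have "T - {x} \<subseteq> V" using assms(1) unfolding mvs_def vertex_separator_def by auto
  ultimately obtain p where p: "p \<in> st_paths E s t" "set p \<inter> (T - {x}) = {}"
    unfolding vertex_separator_def by auto
  have "set p \<inter> T \<noteq> {}" using assms(1) p(1) unfolding mvs_def vertex_separator_def by auto
  then have xp: "x \<in> set p" and pT: "set p \<inter> T = {x}" using p(2) by auto
  from split_list_first[OF xp] obtain u r where ur: "p = u @ x # r" "x \<notin> set u" by blast
  have succ: "successively (\<lambda>x y. (x,y) \<in> E) p" "hd p = s" "last p = t" "p \<noteq> []"
    using p(1) by (auto simp: st_paths_iff)
  show ?thesis
  proof (cases "x \<in> set r")
    case False then show ?thesis using ur p(1) pT by blast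
  next
    case True
    from split_list_last[OF True] obtain r1 v where rv: "r = r1 @ x # v" "x \<notin> set v" by blast
    let ?q = "u @ x # v"
    have "successively (\<lambda>x y. (x,y) \<in> E) ((u @ [x]) @ (r1 @ [x]) @ v)" using succ(1) unfolding ur rv by simp
    then have s1: "successively (\<lambda>x y. (x,y) \<in> E) (u @ [x])" "successively (\<lambda>x y. (x,y) \<in> E) (x # v)"
      unfolding successively_append_iff[of _ "u @ [x]"] successively_append_iff[of _ "r1 @ [x]"]
      by (auto simp: successively_append_iff successively_Cons)
    have "successively (\<lambda>x y. (x,y) \<in> E) ((u @ [x]) @ v)"
      using s1 by (auto simp: successively_append_iff successively_Cons)
    moreover have "hd ?q = s" using succ(2) unfolding ur by (cases u) auto
    moreover have "last ?q = t" using succ(3) unfolding ur rv by (cases v) auto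
    ultimately have "?q \<in> st_paths E s t" by (simp add: st_paths_iff)
    moreover have "set ?q \<inter> T = {x}" using pT unfolding ur rv by auto
    ultimately show ?thesis using ur rv by blast
  qed
qed


lemma weak_if:
  assumes G: "st_graph V E s t" and T: "mvs V E s t T" and ab: "a \<in> T" "b \<in> T"
    and W: "is_walk E W" "length W \<ge> 2" "hd W = a" "last W = b"
  shows "weak V E s t"
proof -
  have Gs: "finite V" "E \<subseteq> V \<times> V" "s \<in> V" "t \<in> V" "s \<noteq> t" "\<forall>u. (u, s) \<notin> E" "\<forall>u. (t, u) \<notin> E"
    using G unfolding st_graph_def by auto
  have sW: "successively (\<lambda>x y. (x,y) \<in> E) W" using W(1) by (simp add: walk_succ)
  define w where "w = tl W"
  have Ww: "W = a # w" "w \<noteq> []" using W(2,3) unfolding w_def by (cases W; auto)+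
  have lw: "last w = b" using W(4) Ww by simp
  have sT: "s \<notin> T"
  proof
    assume "s \<in> T"
    then have "T = {s}" by (rule mvs_s[OF T])
    then have "b = s" using ab by auto
    obtain w' where "w = w' @ [b]" using Ww(2) lw by (metis append_butlast_last_id)
    then have "(last (a # w'), b) \<in> E" using sW Ww by (simp add: successively_append_iff[of _ "a # w'" "[b]", simplified])
    then show False using Gs(6) \<open>b = s\<close> by blast
  qed
  have tT: "t \<notin> T"
  proof
    assume "t \<in> T"
    then have "T = {t}" by (rule mvs_t[OF T])
    then have "a = t" using ab by auto
    then have "(a, hd w) \<in> E" using sW Ww by (cases w) auto
    then show False using Gs(7) \<open>a = t\<close> by blast
  qed
  obtain ua va where Pa: "ua @ a # va \<in> st_paths E s t" "set (ua @ a # va) \<inter> T = {a}" "a \<notin> set ua" "a \<notin> set va"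
    using good_path[OF T ab(1)] by blast
  obtain ub vb where Pb: "ub @ b # vb \<in> st_paths E s t" "set (ub @ b # vb) \<inter> T = {b}" "b \<notin> set ub" "b \<notin> set vb"
    using good_path[OF T ab(2)] by blast
  define pa where "pa = ua @ a # va"
  define pb where "pb = ub @ b # vb"
  define Q where "Q = ua @ W @ vb"
  have sa: "successively (\<lambda>x y. (x,y) \<in> E) (ua @ a # va)" "hd (ua @ a # va) = s"
    using Pa(1) by (auto simp: st_paths_iff)
  have sb: "successively (\<lambda>x y. (x,y) \<in> E) (ub @ b # vb)" "last (ub @ b # vb) = t"
    using Pb(1) by (auto simp: st_paths_iff)
  have sa1: "successively (\<lambda>x y. (x,y) \<in> E) ua" "ua = [] \<or> (last ua, a) \<in> E"
    using sa(1) by (auto simp: successively_append_iff)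
  have sb1: "successively (\<lambda>x y. (x,y) \<in> E) (b # vb)"
    using sb(1) by (auto simp: successively_append_iff)
  then have sb2: "successively (\<lambda>x y. (x,y) \<in> E) vb" "vb = [] \<or> (b, hd vb) \<in> E"
    by (auto simp: successively_Cons)
  have Wne: "W \<noteq> []" using Ww by simp
  have sWv: "successively (\<lambda>x y. (x,y) \<in> E) (W @ vb)"
    unfolding successively_append_iff using sW sb2 W(4) Wne by auto
  have hWv: "hd (W @ vb) = a" using W(3) Wne by simp
  have "successively (\<lambda>x y. (x,y) \<in> E) Q"
    unfolding Q_def successively_append_iff[of _ ua] using sa1 sWv hWv by auto
  moreover have "hd Q = s" using sa(2) unfolding Q_def Ww by (cases ua) auto
  moreover have "last Q = t" using sb(2) lw Ww unfolding Q_def by (cases vb) auto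
  ultimately have Qst: "Q \<in> st_paths E s t" using Wne unfolding Q_def by (simp add: st_paths_iff)
  have QV: "set Q \<subseteq> V" by (rule st_paths_V[OF G Qst])
  have TV: "T \<subseteq> V" and Tsep: "\<forall>p\<in>st_paths E s t. set p \<inter> T \<noteq> {}"
    using T unfolding mvs_def vertex_separator_def by auto
  have cQ: "(if x = a then 1 else 0) + (if x = b then 1 else 0) \<le> count_list Q x" for x
  proof -
    have "b \<in> set w" using lw Ww(2) by auto
    then have "(if x = b then 1 else 0) \<le> count_list w x"
    proof (cases "x = b")
      case True
      then have "count_list w x \<noteq> 0" using \<open>b \<in> set w\<close> by (simp add: count_list_0_iff)
      then show ?thesis using True by simp
    qed simp
    then have "(if x = a then 1 else 0) + (if x = b then 1 else 0) \<le> count_list W x" using Ww by auto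
    then show ?thesis unfolding Q_def by simp
  qed
  have ca: "count_list pa x = (if x = a then 1 else 0)" if "x \<in> T" for x
  proof (cases "x = a")
    case True then show ?thesis using Pa(3,4) unfolding pa_def by simp
  next
    case False
    then have "x \<notin> set pa" using Pa(2) that unfolding pa_def by blast
    then show ?thesis using False by simp
  qed
  have cb: "count_list pb x = (if x = b then 1 else 0)" if "x \<in> T" for x
  proof (cases "x = b")
    case True then show ?thesis using Pb(3,4) unfolding pb_def by simp
  next
    case False
    then have "x \<notin> set pb" using Pb(2) that unfolding pb_def by blast
    then show ?thesis using False by simp
  qed
  define \<eta> where "\<eta> = (\<lambda>v. if v = s \<or> v = t then \<infinity> else if v \<in> T then enat (count_list Q v)
      else enat (count_list Q v + count_list pa v + count_list pb v))"
  have ch: "channel V s t \<eta>" unfolding channel_def \<eta>_def by auto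
  have flQ: "is_flow V E s t \<eta> (pf [Q])"
    unfolding is_flow_def supp_pf using Qst by (auto simp: load_pf \<eta>_def)
  have dd: "dead V E s t (residual \<eta> (pf [Q]))"
    by (rule sep_zero_dead[OF Tsep TV]) (use sT tT in \<open>auto simp: residual_def load_pf \<eta>_def zero_enat_def\<close>)
  have "min_flow V E s t \<eta> \<le> enat 1"
    using min_flow_le[of V E s t \<eta> "pf [Q]"] flQ dd unfolding inhibits_def by (simp add: value_pf)
  moreover have "is_flow V E s t \<eta> (pf [pa, pb])"
    unfolding is_flow_def supp_pf
  proof (intro conjI ballI)
    show "finite (set [pa, pb])" by simp
    show "set [pa, pb] \<subseteq> st_paths E s t" using Pa(1) Pb(1) unfolding pa_def pb_def by simp
    fix v assume "v \<in> V"
    show "enat (load (pf [pa, pb]) v) \<le> \<eta> v"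
    proof (cases "v = s \<or> v = t")
      case True then show ?thesis by (simp add: \<eta>_def)
    next
      case False
      show ?thesis
      proof (cases "v \<in> T")
        case True
        then show ?thesis using False ca[OF True] cb[OF True] cQ[of v] by (simp add: \<eta>_def load_pf)
      next
        case nT: False
        then show ?thesis using False by (simp add: \<eta>_def load_pf)
      qed
    qed
  qed
  then have "enat (Suc (Suc 0)) \<le> max_flow V E s t \<eta>" using max_flow_ge[of V E s t \<eta> "pf [pa, pb]"] by (simp add: value_pf)
  ultimately have "min_flow V E s t \<eta> \<noteq> max_flow V E s t \<eta>"
  proof -
    assume m1: "min_flow V E s t \<eta> \<le> enat 1" and m2: "enat (Suc (Suc 0)) \<le> max_flow V E s t \<eta>"
    show ?thesis
    proof
      assume "min_flow V E s t \<eta> = max_flow V E s t \<eta>"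
      then have "enat (Suc (Suc 0)) \<le> enat 1" using m1 m2 by (metis order_trans)
      then show False by simp
    qed
  qed
  with ch show ?thesis unfolding weak_def by blast
qed


theorem theorem1:
  assumes "st_graph V E s t"
  shows "weak V E s t \<longleftrightarrow>
    (\<exists>T a b p. mvs V E s t T \<and> a \<in> T \<and> b \<in> T \<and>
       is_walk E p \<and> length p \<ge> 2 \<and> hd p = a \<and> last p = b)"
proof
  assume wk: "weak V E s t"
  show "\<exists>T a b p. mvs V E s t T \<and> a \<in> T \<and> b \<in> T \<and>
       is_walk E p \<and> length p \<ge> 2 \<and> hd p = a \<and> last p = b"
  proof (rule ccontr)
    assume nW: "\<not> (\<exists>T a b p. mvs V E s t T \<and> a \<in> T \<and> b \<in> T \<and>
       is_walk E p \<and> length p \<ge> 2 \<and> hd p = a \<and> last p = b)"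
    from wk obtain \<eta> where "min_flow V E s t \<eta> \<noteq> max_flow V E s t \<eta>" unfolding weak_def by blast
    with min_eq_max[OF assms nW, of \<eta>] show False by simp
  qed
next
  assume "\<exists>T a b p. mvs V E s t T \<and> a \<in> T \<and> b \<in> T \<and>
       is_walk E p \<and> length p \<ge> 2 \<and> hd p = a \<and> last p = b"
  then obtain T a b p where "mvs V E s t T" "a \<in> T" "b \<in> T"
       "is_walk E p" "length p \<ge> 2" "hd p = a" "last p = b" by blast
  from weak_if[OF assms this] show "weak V E s t" .
qed

end
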